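(* For any integer $t\geq 2$, there exist a connected graph $G$ and a function $g:V(G_1)\to V(G_2)$ such that $Dist(G)=t=Dist(F_G)$.
   Context: $Dist(H)$ is the least $t$ such that $H$ has a labeling $V(H)\to\{1,\dots,t\}$ preserved by no non-identity automorphism of $H$. Functigraph: for disjoint copies $G_1,G_2$ of a connected graph $G$ and a function $g:V(G_1)\to V(G_2)$, $F_G$ has vertex set $V(G_1)\cup V(G_2)$ and edge set $E(G_1)\cup E(G_2)\cup\{uv: u\in V(G_1),\ g(u)=v\}$. *)

theory Defs
  imports Main
begin

definition simple_graph :: "'a set \<Rightarrow> 'a set set \<Rightarrow> bool" where
  "simple_graph V E \<longleftrightarrow> finite V \<and>
     (\<forall>e\<in>E. \<exists>u v. e = {u, v} \<and> u \<noteq> v \<and> u \<in> V \<and> v \<in> V)"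

definition adj :: "'a set set \<Rightarrow> 'a \<Rightarrow> 'a \<Rightarrow> bool" where
  "adj E u v \<longleftrightarrow> {u, v} \<in> E"

definition connected_graph :: "'a set \<Rightarrow> 'a set set \<Rightarrow> bool" where
  "connected_graph V E \<longleftrightarrow> V \<noteq> {} \<and> (\<forall>u\<in>V. \<forall>v\<in>V. (adj E)\<^sup>*\<^sup>* u v)"

definition automorphism :: "'a set \<Rightarrow> 'a set set \<Rightarrow> ('a \<Rightarrow> 'a) \<Rightarrow> bool" where
  "automorphism V E f \<longleftrightarrow> bij_betw f V V \<and>
     (\<forall>u\<in>V. \<forall>v\<in>V. {u, v} \<in> E \<longleftrightarrow> {f u, f v} \<in> E)"

definition distinguishing :: "'a set \<Rightarrow> 'a set set \<Rightarrow> ('a \<Rightarrow> nat) \<Rightarrow> bool" where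
  "distinguishing V E c \<longleftrightarrow>
     (\<forall>f. automorphism V E f \<and> (\<forall>v\<in>V. c (f v) = c v) \<longrightarrow> (\<forall>v\<in>V. f v = v))"

definition Dist :: "'a set \<Rightarrow> 'a set set \<Rightarrow> nat" where
  "Dist V E = (LEAST t. \<exists>c. (\<forall>v\<in>V. c v \<in> {1..t}) \<and> distinguishing V E c)"

text \<open>Functigraph: copies G1 = Inl-copy and G2 = Inr-copy of G, plus edges u -- g(u).\<close>
definition fg_V :: "'a set \<Rightarrow> ('a + 'a) set" where
  "fg_V V = Inl ` V \<union> Inr ` V"

definition fg_E :: "'a set \<Rightarrow> 'a set set \<Rightarrow> ('a \<Rightarrow> 'a) \<Rightarrow> ('a + 'a) set set" where
  "fg_E V E g = (\<lambda>e. Inl ` e) ` E \<union> (\<lambda>e. Inr ` e) ` E \<union> {{Inl u, Inr (g u)} | u. u \<in> V}"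

end

theory Submission imports Defs begin

definition sw :: "'a \<Rightarrow> 'a \<Rightarrow> 'a \<Rightarrow> 'a" where
  "sw a b x = (if x = a then b else if x = b then a else x)"

lemma sw_bij: "a \<in> V \<Longrightarrow> b \<in> V \<Longrightarrow> bij_betw (sw a b) V V"
  apply (rule bij_betw_imageI)
  by (auto simp: inj_on_def sw_def image_def)

lemma twin_aut:
  assumes "a \<in> V" "b \<in> V"
    and tw: "\<And>w. w \<in> V \<Longrightarrow> w \<noteq> a \<Longrightarrow> w \<noteq> b \<Longrightarrow> ({a,w} \<in> E \<longleftrightarrow> {b,w} \<in> E)"
    and "{a} \<notin> E" "{b} \<notin> E"
  shows "automorphism V E (sw a b)"
  unfolding automorphism_def
proof (intro conjI ballI)
  show "bij_betw (sw a b) V V" using sw_bij assms by metis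
  fix u v assume u: "u \<in> V" and v: "v \<in> V"
  show "({u, v} \<in> E) = ({sw a b u, sw a b v} \<in> E)"
    using tw[OF u] tw[OF v] assms(4,5) u v
  proof (cases "u = a \<or> u = b")
    case True
    then show ?thesis
    proof (cases "v = a \<or> v = b")
      case True
      with \<open>u = a \<or> u = b\<close> assms(4,5) show ?thesis by (auto simp: sw_def insert_commute)
    next
      case False
      then have "sw a b v = v" by (simp add: sw_def)
      with False \<open>u = a \<or> u = b\<close> tw[OF v] show ?thesis by (auto simp: sw_def insert_commute)
    qed
  next
    case False
    then have su: "sw a b u = u" by (simp add: sw_def)
    show ?thesis
    proof (cases "v = a \<or> v = b")
      case True
      with False su tw[OF u] show ?thesis by (auto simp: sw_def insert_commute)
    next
      case F2: False
      then have "sw a b v = v" by (simp add: sw_def)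
      with su show ?thesis by simp
    qed
  qed
qed

lemma dist_lower:
  assumes S: "finite S" "S \<subseteq> V" "card S > s"
    and tw: "\<And>a b. a \<in> S \<Longrightarrow> b \<in> S \<Longrightarrow> a \<noteq> b \<Longrightarrow> automorphism V E (sw a b)"
    and c: "\<forall>v\<in>V. c v \<in> {1..s}"
  shows "\<not> distinguishing V E c"
proof
  assume d: "distinguishing V E c"
  have "\<not> inj_on c S"
  proof
    assume "inj_on c S"
    then have "card (c ` S) = card S" by (simp add: card_image)
    moreover have "c ` S \<subseteq> {1..s}" using c S by auto
    then have "card (c ` S) \<le> s" using card_mono[of "{1..s}"] by fastforce
    ultimately show False using S by simp
  qed
  then obtain a b where ab: "a \<in> S" "b \<in> S" "a \<noteq> b" "c a = c b" unfolding inj_on_def by blast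
  have "\<forall>v\<in>V. c (sw a b v) = c v" using ab by (auto simp: sw_def)
  with d tw[OF ab(1-3)] have "\<forall>v\<in>V. sw a b v = v" unfolding distinguishing_def by blast
  then have "sw a b a = a" using ab S by blast
  then show False using ab by (simp add: sw_def)
qed

lemma Dist_eqI:
  assumes "\<forall>v\<in>V. c v \<in> {1..t}" "distinguishing V E c"
    and "\<And>s c. s < t \<Longrightarrow> \<forall>v\<in>V. c v \<in> {1..s} \<Longrightarrow> \<not> distinguishing V E c"
  shows "Dist V E = t"
  unfolding Dist_def
  apply (rule Least_equality)
  using assms apply blast
  using assms(3) not_less by blast


definition EG :: "nat \<Rightarrow> nat set set" where
  "EG t = (\<lambda>i. {0,i}) ` {1..t}"

definition cG :: "nat \<Rightarrow> nat" where "cG x = max 1 x"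
definition cF :: "nat + nat \<Rightarrow> nat" where "cF = case_sum cG cG"

lemma memE: "{x,y} \<in> EG t \<longleftrightarrow> (x = 0 \<and> y \<in> {1..t}) \<or> (y = 0 \<and> x \<in> {1..t})"
  unfolding EG_def by (auto simp: doubleton_eq_iff)

lemma fgE_eq: "fg_E {0..t} (EG t) (\<lambda>_. 0) = (\<lambda>i. {Inl 0, Inl i}) ` {1..t} \<union>
   (\<lambda>i. {Inr 0, Inr i}) ` {1..t} \<union> (\<lambda>u. {Inl u, Inr (0::nat)}) ` {0..t}"
  unfolding fg_E_def EG_def image_image by (simp add: setcompr_eq_image atLeast0AtMost atMost_def)

lemma memF2: "{x,y} \<in> fg_E {0..t} (EG t) (\<lambda>_. 0) \<longleftrightarrow>
   (x = Inl 0 \<and> y \<in> Inl ` {1..t}) \<or> (y = Inl 0 \<and> x \<in> Inl ` {1..t}) \<or>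
   (x = Inr 0 \<and> y \<in> Inr ` {1..t}) \<or> (y = Inr 0 \<and> x \<in> Inr ` {1..t}) \<or>
   (x = Inr 0 \<and> y \<in> Inl ` {0..t}) \<or> (y = Inr 0 \<and> x \<in> Inl ` {0..t})"
  unfolding fgE_eq image_iff Bex_def Un_iff doubleton_eq_iff by blast

lemma simpleG: "simple_graph {0..t} (EG t)"
  unfolding simple_graph_def EG_def
  apply (intro conjI ballI, simp)
  apply (erule imageE)
  subgoal for e i by (rule exI[of _ 0], rule exI[of _ i]) auto
  done

lemma connG: "connected_graph {0..t} (EG t)"
  unfolding connected_graph_def
proof (intro conjI ballI)
  show "{0..t} \<noteq> {}" by auto
  fix u v assume u: "u \<in> {0..t}" and v: "v \<in> {0..t}"
  have a: "(adj (EG t))\<^sup>*\<^sup>* u 0"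
  proof (cases "u = 0")
    case False
    then have "adj (EG t) u 0" using u unfolding adj_def memE by auto
    then show ?thesis by blast
  qed simp
  have b: "(adj (EG t))\<^sup>*\<^sup>* 0 v"
  proof (cases "v = 0")
    case False
    then have "adj (EG t) 0 v" using v unfolding adj_def memE by auto
    then show ?thesis by blast
  qed simp
  from a b show "(adj (EG t))\<^sup>*\<^sup>* u v" by (rule rtranclp_trans)
qed

lemma DistG:
  assumes "t \<ge> 2"
  shows "Dist {0..t} (EG t) = t"
proof (rule Dist_eqI[where c = cG])
  show "\<forall>v\<in>{0..t}. cG v \<in> {1..t}" using assms by (auto simp: cG_def)
  show "distinguishing {0..t} (EG t) cG"
    unfolding distinguishing_def
  proof (intro allI impI)
    fix f assume "automorphism {0..t} (EG t) f \<and> (\<forall>v\<in>{0..t}. cG (f v) = cG v)"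
    then have bij: "bij_betw f {0..t} {0..t}"
      and hom: "\<And>u v. u \<in> {0..t} \<Longrightarrow> v \<in> {0..t} \<Longrightarrow> {u,v} \<in> EG t \<longleftrightarrow> {f u, f v} \<in> EG t"
      and pres: "\<And>v. v \<in> {0..t} \<Longrightarrow> cG (f v) = cG v"
      unfolding automorphism_def by auto
    have inV: "\<And>v. v \<in> {0..t} \<Longrightarrow> f v \<in> {0..t}" by (rule bij_betw_apply[OF bij])
    have inj: "inj_on f {0..t}" by (rule bij_betw_imp_inj_on[OF bij])
    have big: "f i = i" if "i \<in> {2..t}" for i
    proof -
      have "cG (f i) = i" using pres[of i] that by (auto simp: cG_def)
      then show ?thesis using that by (auto simp: cG_def max_def split: if_splits)
    qed
    have small: "f v \<in> {0,1}" if "v \<in> {0,1}" for v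
    proof -
      have "cG (f v) = 1" using pres[of v] that assms by (auto simp: cG_def)
      then show ?thesis by (auto simp: cG_def max_def split: if_splits)
    qed
    have "{0,2} \<in> EG t" using assms by (simp add: memE)
    then have "{f 0, f 2} \<in> EG t" using hom[of 0 2] assms by simp
    then have "{f 0, 2} \<in> EG t" using big[of 2] assms by simp
    then have f0: "f 0 = 0" using small[of 0] by (auto simp: memE)
    have "f 1 \<noteq> f 0" using inj_onD[OF inj, of 1 0] assms by auto
    then have f1: "f 1 = 1" using small[of 1] f0 by auto
    show "\<forall>v\<in>{0..t}. f v = v"
    proof
      fix v assume "v \<in> {0..t}"
      then have "v = 0 \<or> v = 1 \<or> v \<in> {2..t}" by auto
      then show "f v = v" using f0 f1 big by blast
    qed
  qed
  fix s c assume s: "s < t" and c: "\<forall>v\<in>{0..t}. c v \<in> {1..s}"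
  show "\<not> distinguishing {0..t} (EG t) c"
  proof (rule dist_lower[OF _ _ _ _ c])
    show "finite {1..t}" "{1..t} \<subseteq> {0..t}" "s < card {1..t}" using s by auto
    fix a b assume ab: "a \<in> {1..t}" "b \<in> {1..t}" "a \<noteq> b"
    show "automorphism {0..t} (EG t) (sw a b)"
    proof (rule twin_aut)
      show "a \<in> {0..t}" "b \<in> {0..t}" using ab by auto
      show "{a} \<notin> EG t" "{b} \<notin> EG t" using memE[of a a t] memE[of b b t] ab by auto
      fix w assume "w \<in> {0..t}" "w \<noteq> a" "w \<noteq> b"
      then show "({a, w} \<in> EG t) = ({b, w} \<in> EG t)" using ab by (auto simp: memE)
    qed
  qed
qed


lemma adjInr: "i \<in> {1..t} \<Longrightarrow> {Inr i, w} \<in> fg_E {0..t} (EG t) (\<lambda>_. 0) \<longleftrightarrow> w = Inr 0"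
  by (auto simp: memF2)

lemma cF_big:
  assumes "w \<in> fg_V {0..t}" "cF w = k" "k \<ge> 2"
  shows "w = Inl k \<or> w = Inr k"
  using assms by (auto simp: fg_V_def cF_def cG_def max_def split: if_splits)

lemma cF_one:
  assumes "w \<in> fg_V {0..t}" "cF w = 1"
  shows "w \<in> {Inl 0, Inr 0, Inl 1, Inr 1}"
proof -
  obtain x where "x \<le> t" "w = Inl x \<or> w = Inr x" using assms(1) by (auto simp: fg_V_def)
  moreover have "x \<le> 1" using assms(2) calculation(2) by (auto simp: cF_def cG_def max_def split: if_splits)
  ultimately show ?thesis by (cases x) auto
qed

lemma DistF:
  assumes t2: "t \<ge> 2"
  shows "Dist (fg_V {0..t}) (fg_E {0..t} (EG t) (\<lambda>_. 0)) = t"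
proof (rule Dist_eqI[where c = cF])
  show "\<forall>v\<in>fg_V {0..t}. cF v \<in> {1..t}" using t2 by (auto simp: cF_def cG_def fg_V_def)
  show "distinguishing (fg_V {0..t}) (fg_E {0..t} (EG t) (\<lambda>_. 0)) cF"
    unfolding distinguishing_def
  proof (intro allI impI)
    fix f assume "automorphism (fg_V {0..t}) (fg_E {0..t} (EG t) (\<lambda>_. 0)) f \<and> (\<forall>v\<in>fg_V {0..t}. cF (f v) = cF v)"
    then have bij: "bij_betw f (fg_V {0..t}) (fg_V {0..t})"
      and hom: "\<And>u v. u \<in> fg_V {0..t} \<Longrightarrow> v \<in> fg_V {0..t} \<Longrightarrow>
                 {u,v} \<in> fg_E {0..t} (EG t) (\<lambda>_. 0) \<longleftrightarrow> {f u, f v} \<in> fg_E {0..t} (EG t) (\<lambda>_. 0)"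
      and pres: "\<And>v. v \<in> fg_V {0..t} \<Longrightarrow> cF (f v) = cF v"
      unfolding automorphism_def by auto
    have inV: "\<And>v. v \<in> fg_V {0..t} \<Longrightarrow> f v \<in> fg_V {0..t}" by (rule bij_betw_apply[OF bij])
    have inj: "inj_on f (fg_V {0..t})" by (rule bij_betw_imp_inj_on[OF bij])
    have W: "Inl x \<in> fg_V {0..t}" "Inr x \<in> fg_V {0..t}" if "x \<le> t" for x
      using that by (auto simp: fg_V_def)
    have injD: "f a \<noteq> f b" if "a \<in> fg_V {0..t}" "b \<in> fg_V {0..t}" "a \<noteq> b" for a b
      using inj_onD[OF inj _ that(1,2)] that(3) by blast
    let ?Q = "{Inl 0, Inr 0, Inl 1, Inr 1} :: (nat + nat) set"
    have Q: "f q \<in> ?Q" if "q \<in> ?Q" for q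
    proof (rule cF_one)
      have "q \<in> fg_V {0..t}" using that t2 W by auto
      then show "f q \<in> fg_V {0..t}" "cF (f q) = 1" using inV pres that by (auto simp: cF_def cG_def)
    qed
    have Bg: "f w = Inl i \<or> f w = Inr i" if "i \<in> {2..t}" "w = Inl i \<or> w = Inr i" for i w
    proof (rule cF_big)
      have "w \<in> fg_V {0..t}" using that W by auto
      then show "f w \<in> fg_V {0..t}" "cF (f w) = i" using inV pres that by (auto simp: cF_def cG_def)
      show "2 \<le> i" using that by simp
    qed
    have fIl0: "f (Inl 0) \<in> ?Q" and fIr0: "f (Inr 0) \<in> ?Q" and fIl1: "f (Inl 1) \<in> ?Q"
      and fIr1: "f (Inr 1) \<in> ?Q" using Q by auto
    have d00: "f (Inl 0) \<noteq> f (Inr 0)" by (rule injD) (auto simp: W)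
    have step2: "f (Inl i) = Inl i" if i: "i \<in> {2..t}" for i
    proof (rule ccontr)
      assume "f (Inl i) \<noteq> Inl i"
      then have fi: "f (Inl i) = Inr i" using Bg[OF i] by blast
      have "{Inl i, Inl 0} \<in> fg_E {0..t} (EG t) (\<lambda>_. 0)" using i by (auto simp: memF2)
      then have "{Inr i, f (Inl 0)} \<in> fg_E {0..t} (EG t) (\<lambda>_. 0)"
        using hom[of "Inl i" "Inl 0"] i W fi by auto
      then have a: "f (Inl 0) = Inr 0" using adjInr[of i t] i by auto
      have "{Inl i, Inr 0} \<in> fg_E {0..t} (EG t) (\<lambda>_. 0)" using i by (auto simp: memF2)
      then have "{Inr i, f (Inr 0)} \<in> fg_E {0..t} (EG t) (\<lambda>_. 0)"
        using hom[of "Inl i" "Inr 0"] i W fi by auto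
      then have b: "f (Inr 0) = Inr 0" using adjInr[of i t] i by auto
      from a b d00 show False by simp
    qed
    have step3: "f (Inr i) = Inr i" if i: "i \<in> {2..t}" for i
    proof -
      have "f (Inr i) \<noteq> f (Inl i)" by (rule injD) (use i W in auto)
      then show ?thesis using Bg[OF i] step2[OF i] by auto
    qed
    have i2: "(2::nat) \<in> {2..t}" using t2 by simp
    have "{Inr 2, Inr 0} \<in> fg_E {0..t} (EG t) (\<lambda>_. 0)" using t2 by (auto simp: memF2)
    then have "{Inr 2, f (Inr 0)} \<in> fg_E {0..t} (EG t) (\<lambda>_. 0)"
      using hom[of "Inr 2" "Inr 0"] t2 W step3[OF i2] by auto
    then have r0: "f (Inr 0) = Inr 0" using adjInr[of 2 t] t2 by auto
    have "{Inl 2, Inl 0} \<in> fg_E {0..t} (EG t) (\<lambda>_. 0)" using t2 by (auto simp: memF2)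
    then have "{Inl 2, f (Inl 0)} \<in> fg_E {0..t} (EG t) (\<lambda>_. 0)"
      using hom[of "Inl 2" "Inl 0"] t2 W step2[OF i2] by auto
    then have "f (Inl 0) = Inl 0 \<or> f (Inl 0) = Inr 0" using fIl0 by (auto simp: memF2)
    then have l0: "f (Inl 0) = Inl 0" using r0 d00 by auto
    have "{Inl 1, Inl 0} \<in> fg_E {0..t} (EG t) (\<lambda>_. 0)" using t2 by (auto simp: memF2)
    then have "{f (Inl 1), Inl 0} \<in> fg_E {0..t} (EG t) (\<lambda>_. 0)"
      using hom[of "Inl 1" "Inl 0"] t2 W l0 by auto
    then have "f (Inl 1) = Inl 1 \<or> f (Inl 1) = Inr 0" using fIl1 by (auto simp: memF2)
    moreover have "f (Inl 1) \<noteq> f (Inr 0)" by (rule injD) (use t2 W in auto)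
    ultimately have l1: "f (Inl 1) = Inl 1" using r0 by auto
    have "f (Inr 1) \<noteq> f (Inr 0)" "f (Inr 1) \<noteq> f (Inl 0)" "f (Inr 1) \<noteq> f (Inl 1)"
      by (rule injD; use t2 W in auto)+
    then have r1: "f (Inr 1) = Inr 1" using fIr1 l0 l1 r0 by auto
    show "\<forall>v\<in>fg_V {0..t}. f v = v"
    proof
      fix v assume "v \<in> fg_V {0..t}"
      then obtain x where x: "x \<le> t" "v = Inl x \<or> v = Inr x" by (auto simp: fg_V_def)
      then have "x = 0 \<or> x = 1 \<or> x \<in> {2..t}" by auto
      then show "f v = v" using x l0 l1 r0 r1 step2 step3 by blast
    qed
  qed
  fix s c assume s: "s < t" and c: "\<forall>v\<in>fg_V {0..t}. c v \<in> {1..s}"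
  show "\<not> distinguishing (fg_V {0..t}) (fg_E {0..t} (EG t) (\<lambda>_. 0)) c"
  proof (rule dist_lower[OF _ _ _ _ c])
    show "finite (Inr ` {1..t} :: (nat + nat) set)" by simp
    show "(Inr ` {1..t} :: (nat + nat) set) \<subseteq> fg_V {0..t}" by (auto simp: fg_V_def)
    have "card (Inr ` {1..t} :: (nat + nat) set) = t" by (simp add: card_image)
    then show "s < card (Inr ` {1..t} :: (nat + nat) set)" using s by simp
    fix a b :: "nat + nat" assume ab: "a \<in> Inr ` {1..t}" "b \<in> Inr ` {1..t}" "a \<noteq> b"
    then obtain i j where ij: "a = Inr i" "b = Inr j" "i \<in> {1..t}" "j \<in> {1..t}" by blast
    show "automorphism (fg_V {0..t}) (fg_E {0..t} (EG t) (\<lambda>_. 0)) (sw a b)"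
    proof (rule twin_aut)
      show "a \<in> fg_V {0..t}" "b \<in> fg_V {0..t}" using ij by (auto simp: fg_V_def)
      have "{Inr i, Inr i} \<notin> fg_E {0..t} (EG t) (\<lambda>_. 0)"
        by (subst adjInr[OF ij(3)]) (use ij(3) in simp)
      moreover have "{Inr j, Inr j} \<notin> fg_E {0..t} (EG t) (\<lambda>_. 0)"
        by (subst adjInr[OF ij(4)]) (use ij(4) in simp)
      ultimately show "{a} \<notin> fg_E {0..t} (EG t) (\<lambda>_. 0)" "{b} \<notin> fg_E {0..t} (EG t) (\<lambda>_. 0)"
        using ij by auto
      fix w
      show "({a, w} \<in> fg_E {0..t} (EG t) (\<lambda>_. 0)) = ({b, w} \<in> fg_E {0..t} (EG t) (\<lambda>_. 0))"
        by (simp only: ij(1,2) adjInr[OF ij(3)] adjInr[OF ij(4)])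
    qed
  qed
qed

theorem lemma2p6:
  fixes t :: nat
  assumes "t \<ge> 2"
  shows "\<exists>(V :: nat set) E g. simple_graph V E \<and> connected_graph V E \<and> g ` V \<subseteq> V \<and>
           Dist V E = t \<and> Dist (fg_V V) (fg_E V E g) = t"
  apply (rule exI[of _ "{0..t}"], rule exI[of _ "EG t"], rule exI[of _ "\<lambda>_. 0"])
  using simpleG[of t] connG[of t] DistG[OF assms] DistF[OF assms] by auto

end
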